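(* Let $X$ be a nominal set and $g:\mathcal V\to X$ any function. Then $g\in RX$ if and only if (1) $x\# g(x)$ for all $x\in\mathcal V$, and (2) there is a finite set $S\subseteq\mathcal V$ such that $\mathsf{supp}(g(x))\subseteq S$ for all $x\in\mathcal V$ and $g$ is constant on $\mathcal V\setminus S$.
   Context: Nominal sets over a countably infinite set $\mathcal V$ of names (sets with an action of finite permutations of $\mathcal V$, every element having a finite support; $\mathsf{supp}(u)$ the least support, $x\#u$ iff $x\notin\mathsf{supp}(u)$). $[\mathcal V,X]$ denotes the nominal set of functions $\mathcal V\to X$ that are finitely supported under $(\pi\cdot f)(x)=\pi\cdot f(\pi^{-1}(x))$. $RX=\{g\in[\mathcal V,X]\mid \forall x\in\mathcal V,\ x\#g(x)\}$. *)

theory Defs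
  imports Main "HOL-Library.Countable_Set"
begin

text \<open>Names are the elements of a type 'v (assumed countably infinite in the theorem).
  Finite permutations of names:\<close>
definition fperm :: "('v \<Rightarrow> 'v) \<Rightarrow> bool" where
  "fperm \<pi> \<longleftrightarrow> bij \<pi> \<and> finite {a. \<pi> a \<noteq> a}"

definition supports :: "(('v \<Rightarrow> 'v) \<Rightarrow> 'a \<Rightarrow> 'a) \<Rightarrow> 'v set \<Rightarrow> 'a \<Rightarrow> bool" where
  "supports act S u \<longleftrightarrow> (\<forall>\<pi>. fperm \<pi> \<and> (\<forall>a\<in>S. \<pi> a = a) \<longrightarrow> act \<pi> u = u)"

definition nominal_set :: "'a set \<Rightarrow> (('v \<Rightarrow> 'v) \<Rightarrow> 'a \<Rightarrow> 'a) \<Rightarrow> bool" where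
  "nominal_set X act \<longleftrightarrow>
     (\<forall>\<pi> u. fperm \<pi> \<and> u \<in> X \<longrightarrow> act \<pi> u \<in> X) \<and>
     (\<forall>u\<in>X. act id u = u) \<and>
     (\<forall>\<pi> \<sigma> u. fperm \<pi> \<and> fperm \<sigma> \<and> u \<in> X \<longrightarrow> act (\<pi> \<circ> \<sigma>) u = act \<pi> (act \<sigma> u)) \<and>
     (\<forall>u\<in>X. \<exists>S. finite S \<and> supports act S u)"

definition supp :: "(('v \<Rightarrow> 'v) \<Rightarrow> 'a \<Rightarrow> 'a) \<Rightarrow> 'a \<Rightarrow> 'v set" where
  "supp act u = \<Inter>{S. finite S \<and> supports act S u}"

definition fresh :: "(('v \<Rightarrow> 'v) \<Rightarrow> 'a \<Rightarrow> 'a) \<Rightarrow> 'v \<Rightarrow> 'a \<Rightarrow> bool" where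
  "fresh act a u \<longleftrightarrow> a \<notin> supp act u"

definition fun_act :: "(('v \<Rightarrow> 'v) \<Rightarrow> 'a \<Rightarrow> 'a) \<Rightarrow> ('v \<Rightarrow> 'v) \<Rightarrow> ('v \<Rightarrow> 'a) \<Rightarrow> ('v \<Rightarrow> 'a)" where
  "fun_act act \<pi> f = (\<lambda>x. act \<pi> (f (inv \<pi> x)))"

definition fs_funs :: "'a set \<Rightarrow> (('v \<Rightarrow> 'v) \<Rightarrow> 'a \<Rightarrow> 'a) \<Rightarrow> ('v \<Rightarrow> 'a) set" where
  "fs_funs X act = {f. (\<forall>x. f x \<in> X) \<and> (\<exists>S. finite S \<and> supports (fun_act act) S f)}"

definition R_set :: "'a set \<Rightarrow> (('v \<Rightarrow> 'v) \<Rightarrow> 'a \<Rightarrow> 'a) \<Rightarrow> ('v \<Rightarrow> 'a) set" where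
  "R_set X act = {g \<in> fs_funs X act. \<forall>x. fresh act x (g x)}"

end

theory Submission
  imports Defs
begin

definition sw :: "'v \<Rightarrow> 'v \<Rightarrow> 'v \<Rightarrow> 'v" where
  "sw a b = (\<lambda>x. if x = a then b else if x = b then a else x)"

lemma sw_inv: "sw a b (sw a b x) = x" by (simp add: sw_def)

lemma sw_bij: "bij (sw a b)"
  by (rule o_bij[where g="sw a b"]) (simp_all add: fun_eq_iff sw_inv)

lemma sw_invfun: "inv (sw a b) = sw a b"
  by (rule inv_equality) (rule sw_inv)+

lemma sw_fperm: "fperm (sw a b)"
proof -
  have "{x. sw a b x \<noteq> x} \<subseteq> {a, b}" by (auto simp: sw_def)
  then have "finite {x. sw a b x \<noteq> x}" by (rule finite_subset) simp
  then show ?thesis unfolding fperm_def using sw_bij by simp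
qed

lemma supp_sub: "finite S \<Longrightarrow> supports act S u \<Longrightarrow> supp act u \<subseteq> S"
  unfolding supp_def by blast

lemma fix_inv:
  assumes b: "bij \<pi>" and e: "\<pi> w = w" shows "inv \<pi> w = w"
proof -
  have "inv \<pi> (\<pi> w) = w" by (rule inv_f_f[OF bij_is_inj[OF b]])
  then show ?thesis by (simp only: e)
qed

theorem lemma4p12:
  fixes X :: "'a set" and act :: "('v \<Rightarrow> 'v) \<Rightarrow> 'a \<Rightarrow> 'a" and g :: "'v \<Rightarrow> 'a"
  assumes "infinite (UNIV :: 'v set)" and "countable (UNIV :: 'v set)"
    and "nominal_set X act"
    and "\<forall>x. g x \<in> X"
  shows "g \<in> R_set X act \<longleftrightarrow>
           (\<forall>x. fresh act x (g x)) \<and>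
           (\<exists>S. finite S \<and> (\<forall>x. supp act (g x) \<subseteq> S) \<and>
                (\<forall>x y. x \<notin> S \<and> y \<notin> S \<longrightarrow> g x = g y))"
proof
  assume g: "g \<in> R_set X act"
  then have fr: "\<forall>x. fresh act x (g x)" by (simp add: R_set_def)
  from g obtain T where T: "finite T" "supports (fun_act act) T g"
    by (auto simp: R_set_def fs_funs_def)
  have inv: "\<And>\<pi>. fperm \<pi> \<Longrightarrow> \<forall>a\<in>T. \<pi> a = a \<Longrightarrow> act \<pi> (g (inv \<pi> w)) = g w" for w
  proof -
    fix \<pi> assume "fperm \<pi>" "\<forall>a\<in>T. \<pi> a = a"
    then have "fun_act act \<pi> g = g" using T(2) by (simp add: supports_def)
    from fun_cong[OF this, of w] show "act \<pi> (g (inv \<pi> w)) = g w" unfolding fun_act_def by simp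
  qed
  have supx: "supp act (g x) \<subseteq> T" for x
  proof -
    have sup: "supports act (insert x T) (g x)"
      unfolding supports_def
    proof (intro allI impI)
      fix \<pi> assume h: "fperm \<pi> \<and> (\<forall>a\<in>insert x T. \<pi> a = a)"
      have "bij \<pi>" using h by (simp add: fperm_def)
      moreover have "\<pi> x = x" using h by simp
      ultimately have "inv \<pi> x = x" by (rule fix_inv)
      moreover have "act \<pi> (g (inv \<pi> x)) = g x" by (rule inv) (use h in auto)
      ultimately show "act \<pi> (g x) = g x" by simp
    qed
    have fin: "finite (insert x T)" using T(1) by simp
    have "supp act (g x) \<subseteq> insert x T" by (rule supp_sub[OF fin sup])
    moreover have "x \<notin> supp act (g x)" using fr by (simp add: fresh_def)
    ultimately show ?thesis by blast
  qed
  have const: "g x = g y" if "x \<notin> T" "y \<notin> T" for x y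
  proof -
    have "x \<in> UNIV - supp act (g x)" using fr by (simp add: fresh_def)
    then obtain A where A: "finite A" "supports act A (g x)" "x \<notin> A"
      unfolding supp_def by blast
    have "y \<in> UNIV - supp act (g y)" using fr by (simp add: fresh_def)
    then obtain B where B: "finite B" "supports act B (g y)" "y \<notin> B"
      unfolding supp_def by blast
    have "finite (T \<union> A \<union> B \<union> {x, y})" using A B T by simp
    from ex_new_if_finite[OF assms(1) this] obtain z where z: "z \<notin> T \<union> A \<union> B \<union> {x, y}"
      by blast
    have e: "g u = g z" if "u \<notin> T" "u \<noteq> z" "finite C" "supports act C (g u)" "u \<notin> C" "z \<notin> C" for u C
    proof -
      have fix1: "\<forall>a\<in>T. sw u z a = a" using that z by (auto simp: sw_def)
      have fix2: "\<forall>a\<in>C. sw u z a = a" using that by (auto simp: sw_def)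
      have "act (sw u z) (g (inv (sw u z) z)) = g z" using inv[OF sw_fperm fix1] .
      moreover have "inv (sw u z) z = u" unfolding sw_invfun by (simp add: sw_def)
      moreover have "act (sw u z) (g u) = g u"
        using that(4)[unfolded supports_def, rule_format, OF conjI[OF sw_fperm fix2]] .
      ultimately show ?thesis by simp
    qed
    have zx: "x \<noteq> z" "z \<notin> A" "y \<noteq> z" "z \<notin> B" using z by auto
    have "g x = g z" by (rule e[OF that(1) zx(1) A(1,2,3) zx(2)])
    moreover have "g y = g z" by (rule e[OF that(2) zx(3) B(1,2,3) zx(4)])
    ultimately show ?thesis by simp
  qed
  show "(\<forall>x. fresh act x (g x)) \<and>
           (\<exists>S. finite S \<and> (\<forall>x. supp act (g x) \<subseteq> S) \<and>
                (\<forall>x y. x \<notin> S \<and> y \<notin> S \<longrightarrow> g x = g y))"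
  proof -
    have "finite T \<and> (\<forall>x. supp act (g x) \<subseteq> T) \<and> (\<forall>x y. x \<notin> T \<and> y \<notin> T \<longrightarrow> g x = g y)"
      using T(1) supx const by simp
    then show ?thesis using fr by blast
  qed
next
  assume h: "(\<forall>x. fresh act x (g x)) \<and>
           (\<exists>S. finite S \<and> (\<forall>x. supp act (g x) \<subseteq> S) \<and>
                (\<forall>x y. x \<notin> S \<and> y \<notin> S \<longrightarrow> g x = g y))"
  then obtain S where S: "finite S" "\<forall>x y. x \<notin> S \<and> y \<notin> S \<longrightarrow> g x = g y" by blast
  have ex: "\<forall>u\<in>X. \<exists>S. finite S \<and> supports act S u" using assms(3) by (simp add: nominal_set_def)
  define F where "F u = (SOME A. finite A \<and> supports act A u)" for u
  have F: "finite (F (g x)) \<and> supports act (F (g x)) (g x)" for x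
  proof -
    have "\<exists>A. finite A \<and> supports act A (g x)" using ex assms(4) by blast
    then show ?thesis unfolding F_def by (rule someI_ex)
  qed
  from ex_new_if_finite[OF assms(1) S(1)] obtain c where c: "c \<notin> S" by blast
  define T where "T = S \<union> (\<Union>x\<in>S. F (g x)) \<union> F (g c)"
  have Tf: "finite T"
  proof -
    have "finite (\<Union>x\<in>S. F (g x))" using S(1) F by simp
    then show ?thesis unfolding T_def using S(1) F by simp
  qed
  have ST: "S \<subseteq> T" "F (g c) \<subseteq> T" unfolding T_def by blast+
  have FT: "w \<in> S \<Longrightarrow> F (g w) \<subseteq> T" for w unfolding T_def by blast
  have "supports (fun_act act) T g"
    unfolding supports_def
  proof (intro allI impI)
    fix \<pi> assume p: "fperm \<pi> \<and> (\<forall>a\<in>T. \<pi> a = a)"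
    then have bij: "bij \<pi>" by (simp add: fperm_def)
    have fp: "fperm \<pi>" using p by simp
    have pT: "\<And>a. a \<in> T \<Longrightarrow> \<pi> a = a" using p by simp
    have key: "act \<pi> (g (inv \<pi> w)) = g w" for w
    proof (cases "w \<in> S")
      case True
      have pw: "\<pi> w = w" using ST True pT by blast
      have iw: "inv \<pi> w = w" by (rule fix_inv[OF bij pw])
      have fx: "\<forall>a\<in>F (g w). \<pi> a = a"
      proof
        fix a assume "a \<in> F (g w)"
        then have "a \<in> T" using FT[OF True] by (rule subsetD[rotated])
        then show "\<pi> a = a" by (rule pT)
      qed
      have sw: "supports act (F (g w)) (g w)" using F by blast
      have aw: "act \<pi> (g w) = g w" using sw[unfolded supports_def, rule_format, OF conjI[OF fp fx]] .
      show ?thesis unfolding iw by (rule aw)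
    next
      case False
      have "inv \<pi> w \<notin> S"
      proof
        assume iw: "inv \<pi> w \<in> S"
        then have "\<pi> (inv \<pi> w) = inv \<pi> w" using ST pT by blast
        moreover have "\<pi> (inv \<pi> w) = w" by (rule surj_f_inv_f[OF bij_is_surj[OF bij]])
        ultimately show False using False iw by simp
      qed
      then have "g (inv \<pi> w) = g c" "g w = g c" using S(2) c False by blast+
      moreover have fc: "\<forall>a\<in>F (g c). \<pi> a = a" using pT ST by blast
      moreover have "supports act (F (g c)) (g c)" using F by blast
      then have "act \<pi> (g c) = g c" using fc fp unfolding supports_def by blast
      ultimately show ?thesis by simp
    qed
    show "fun_act act \<pi> g = g" unfolding fun_act_def by (rule ext) (rule key)
  qed
  then have "g \<in> fs_funs X act" using Tf assms(4) unfolding fs_funs_def by blast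
  then show "g \<in> R_set X act" using h unfolding R_set_def by blast
qed

end
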